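(* Let $f,g:[a;b]\to\mathbb{R}$ be two regulated functions. Let $[c;d]\subset[a;b]$, let $c=t_0<t_1<\ldots<t_n=d$ be any partition of $[c;d]$, and let $\xi_0=c$ and $\xi_1,\ldots,\xi_n$ be such that $t_{i-1}\le\xi_i\le t_i$ for $i=1,2,\ldots,n$. Let $\delta_{-1}:=\sup_{c\le t\le d}|f(t)-f(c)|$, and let $\delta_0\ge\delta_1\ge\ldots\ge\delta_r\ge0$ and $\varepsilon_0\ge\varepsilon_1\ge\ldots\ge\varepsilon_r\ge0$. Then \[ \left|\sum_{i=1}^{n}f(\xi_i)\left[g(t_i)-g(t_{i-1})\right]-f(c)\left[g(d)-g(c)\right]\right| \le\sum_{k=0}^{r}2^{k}\delta_{k-1}\cdot TV(g,[c;d],\varepsilon_k)+\sum_{k=0}^{r}2^{k}\varepsilon_k\cdot TV(f,[c;d],\delta_k)+n\delta_r\varepsilon_r. \]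
   Context: A function $h:[a;b]\to\mathbb{R}$ is regulated if the one-sided finite limits $\lim_{t\to a+}h(t)$, $\lim_{t\to b-}h(t)$ exist and, for every $x\in(a;b)$, both finite limits $\lim_{t\to x-}h(t)$ and $\lim_{t\to x+}h(t)$ exist. The total variation of $h$ on $[c;d]$ is $TV(h,[c;d],0)=\sup_n\sup_{c\le t_1<\dots<t_n\le d}\sum_{i=2}^{n}|h(t_i)-h(t_{i-1})|$. For $\delta\ge0$, the truncated variation of $h$ on $[c;d]$ is $TV(h,[c;d],\delta):=\inf\{TV(u,[c;d],0): \sup_{c\le t\le d}|h(t)-u(t)|\le\delta/2\}$; for regulated $h$ and $\delta>0$ it equals $\sup_n\sup_{c\le t_1<\dots<t_n\le d}\sum_{i=2}^{n}\max\{|h(t_i)-h(t_{i-1})|-\delta,0\}$. *)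

theory Defs
  imports "HOL-Analysis.Analysis" "HOL-Library.Extended_Real"
begin

definition regulated :: "(real \<Rightarrow> real) \<Rightarrow> real \<Rightarrow> real \<Rightarrow> bool" where
  "regulated h a b \<longleftrightarrow>
     (\<exists>l. (h \<longlongrightarrow> l) (at a within {a<..b})) \<and>
     (\<exists>l. (h \<longlongrightarrow> l) (at b within {a..<b})) \<and>
     (\<forall>x\<in>{a<..<b}. (\<exists>l. (h \<longlongrightarrow> l) (at_left x)) \<and> (\<exists>l. (h \<longlongrightarrow> l) (at_right x)))"

text \<open>Values in ereal, since the (untruncated) total variation may be infinite.\<close>
definition TV :: "(real \<Rightarrow> real) \<Rightarrow> real \<Rightarrow> real \<Rightarrow> real \<Rightarrow> ereal" where
  "TV h c d \<delta> = Sup {ereal (\<Sum>i\<in>{1..<m}. max (\<bar>h (s i) - h (s (i - 1))\<bar> - \<delta>) 0) | m s.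
       (\<forall>i<m. c \<le> s i \<and> s i \<le> d) \<and> (\<forall>i. Suc i < m \<longrightarrow> s i < s (Suc i))}"

end

theory Submission
  imports Defs
begin

fun sdp :: "(nat \<Rightarrow> real) \<Rightarrow> real \<Rightarrow> nat \<Rightarrow> real" where
 "sdp y e k = (if k = 0 then 0 else max 0 (Max ((\<lambda>j. sdp y e j + max (\<bar>y k - y j\<bar> - e) 0) ` {..<k})))"

declare sdp.simps[simp del]

lemma sdp_nonneg: "0 \<le> sdp y e k"
  by (subst sdp.simps) simp

lemma sdp_ge: assumes "j < k" shows "sdp y e j + max (\<bar>y k - y j\<bar> - e) 0 \<le> sdp y e k"
proof -
  have "sdp y e j + max (\<bar>y k - y j\<bar> - e) 0 \<le> Max ((\<lambda>j. sdp y e j + max (\<bar>y k - y j\<bar> - e) 0) ` {..<k})"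
    using assms by (intro Max_ge) auto
  also have "\<dots> \<le> sdp y e k" using assms by (subst (2) sdp.simps) simp
  finally show ?thesis .
qed

lemma sdp_cases: "sdp y e k = 0 \<or> (\<exists>j<k. sdp y e k = sdp y e j + max (\<bar>y k - y j\<bar> - e) 0)"
proof (cases "k = 0")
  case True then show ?thesis by (subst sdp.simps) simp
next
  case False
  let ?M = "Max ((\<lambda>j. sdp y e j + max (\<bar>y k - y j\<bar> - e) 0) ` {..<k})"
  have "?M \<in> (\<lambda>j. sdp y e j + max (\<bar>y k - y j\<bar> - e) 0) ` {..<k}"
    using False by (intro Max_in) auto
  then obtain j where j: "j < k" "?M = sdp y e j + max (\<bar>y k - y j\<bar> - e) 0" by auto
  have "sdp y e k = max 0 ?M" using False by (subst sdp.simps) simp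
  then show ?thesis using j by (auto simp: max_def)
qed

lemma sdp_real:
  fixes h :: "real \<Rightarrow> real" and x :: "nat \<Rightarrow> real"
  assumes e: "0 \<le> e" and mono: "\<And>i j. i \<le> j \<Longrightarrow> j \<le> n \<Longrightarrow> x i \<le> x j"
    and rng: "\<And>i. i \<le> n \<Longrightarrow> c \<le> x i"
  shows "k \<le> n \<Longrightarrow> \<exists>m \<sigma>. 0 < m \<and> \<sigma> (m-1) = x k \<and> (\<forall>i<m. c \<le> \<sigma> i \<and> \<sigma> i \<le> x k)
     \<and> (\<forall>i. Suc i < m \<longrightarrow> \<sigma> i < \<sigma> (Suc i))
     \<and> sdp (\<lambda>i. h (x i)) e k \<le> (\<Sum>i\<in>{1..<m}. max (\<bar>h (\<sigma> i) - h (\<sigma> (i-1))\<bar> - e) 0)"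
proof (induction k rule: less_induct)
  case (less k)
  let ?y = "\<lambda>i. h (x i)"
  from sdp_cases[of ?y e k] show ?case
  proof
    assume "sdp ?y e k = 0"
    then show ?thesis using less.prems rng
      by (intro exI[of _ 1] exI[of _ "\<lambda>_. x k"]) auto
  next
    assume "\<exists>j<k. sdp ?y e k = sdp ?y e j + max (\<bar>?y k - ?y j\<bar> - e) 0"
    then obtain j where j: "j < k" "sdp ?y e k = sdp ?y e j + max (\<bar>?y k - ?y j\<bar> - e) 0" by blast
    from less.IH[OF j(1)] j(1) less.prems obtain m \<sigma> where
      m: "0 < m" "\<sigma> (m-1) = x j" "\<forall>i<m. c \<le> \<sigma> i \<and> \<sigma> i \<le> x j"
      "\<forall>i. Suc i < m \<longrightarrow> \<sigma> i < \<sigma> (Suc i)"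
      "sdp ?y e j \<le> (\<Sum>i\<in>{1..<m}. max (\<bar>h (\<sigma> i) - h (\<sigma> (i-1))\<bar> - e) 0)" by auto
    have xjk: "x j \<le> x k" using mono j(1) less.prems by simp
    show ?thesis
    proof (cases "x j = x k")
      case True
      then have "sdp ?y e k = sdp ?y e j" using j e by simp
      then show ?thesis using m True by (intro exI[of _ m] exI[of _ \<sigma>]) auto
    next
      case False
      with xjk have lt: "x j < x k" by simp
      define \<sigma>' where "\<sigma>' = \<sigma>(m := x k)"
      have s1: "(\<Sum>i\<in>{1..<m}. max (\<bar>h (\<sigma>' i) - h (\<sigma>' (i-1))\<bar> - e) 0)
          = (\<Sum>i\<in>{1..<m}. max (\<bar>h (\<sigma> i) - h (\<sigma> (i-1))\<bar> - e) 0)"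
        by (rule sum.cong) (auto simp: \<sigma>'_def)
      have s2: "(\<Sum>i\<in>{1..<Suc m}. max (\<bar>h (\<sigma>' i) - h (\<sigma>' (i-1))\<bar> - e) 0)
          = (\<Sum>i\<in>{1..<m}. max (\<bar>h (\<sigma>' i) - h (\<sigma>' (i-1))\<bar> - e) 0)
            + max (\<bar>h (\<sigma>' m) - h (\<sigma>' (m-1))\<bar> - e) 0"
        using m(1) by (simp add: sum.atLeastLessThan_Suc)
      have s3: "\<sigma>' m = x k" "\<sigma>' (m-1) = x j" using m(1,2) by (auto simp: \<sigma>'_def)
      have strict: "\<forall>i. Suc i < Suc m \<longrightarrow> \<sigma>' i < \<sigma>' (Suc i)"
      proof (intro allI impI)
        fix i assume "Suc i < Suc m"
        then consider "Suc i < m" | "Suc i = m" by linarith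
        then show "\<sigma>' i < \<sigma>' (Suc i)"
        proof cases
          case 1 then show ?thesis using m(4) by (auto simp: \<sigma>'_def)
        next
          case 2 then have "i = m - 1" by simp
          then show ?thesis using 2 s3 lt by simp
        qed
      qed
      have bnd: "\<forall>i<Suc m. c \<le> \<sigma>' i \<and> \<sigma>' i \<le> x k"
        using m(3) lt rng less.prems by (auto simp: \<sigma>'_def less_Suc_eq)
      show ?thesis
        apply (rule exI[of _ "Suc m"], rule exI[of _ \<sigma>'])
        using strict bnd s1 s2 s3 m(5) j(2) by auto
    qed
  qed
qed

lemma dp_track:
  fixes y s :: "nat \<Rightarrow> real"
  assumes e: "0 \<le> e" and s0: "\<And>k. 0 \<le> s k"
    and sge: "\<And>j k. j < k \<Longrightarrow> s j + \<bar>y k - y j\<bar> - e \<le> s k"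
  shows "\<bar>v - y n\<bar> \<le> e/2 \<Longrightarrow> \<exists>z. z n = v \<and> (\<forall>i\<le>n. \<bar>z i - y i\<bar> \<le> e/2) \<and>
     (\<forall>B. 0 \<le> B \<and> (\<forall>k\<le>n. s k + \<bar>v - y k\<bar> - e/2 \<le> B) \<longrightarrow> (\<Sum>i=1..n. \<bar>z i - z (i-1)\<bar>) \<le> B)"
proof (induction n arbitrary: v)
  case 0
  then show ?case by (intro exI[of _ "\<lambda>_. v"]) auto
next
  case (Suc n)
  define u where "u = (if \<bar>v - y n\<bar> \<le> e/2 then v else if v > y n then y n + e/2 else y n - e/2)"
  have u: "\<bar>u - y n\<bar> \<le> e/2" using e by (auto simp: u_def)
  from Suc.IH[OF u] obtain z where z: "z n = u" "\<forall>i\<le>n. \<bar>z i - y i\<bar> \<le> e/2"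
     "\<forall>B. 0 \<le> B \<and> (\<forall>k\<le>n. s k + \<bar>u - y k\<bar> - e/2 \<le> B) \<longrightarrow> (\<Sum>i=1..n. \<bar>z i - z (i-1)\<bar>) \<le> B"
    by blast
  define z' where "z' = z(Suc n := v)"
  have sumeq: "(\<Sum>i=1..Suc n. \<bar>z' i - z' (i-1)\<bar>) = (\<Sum>i=1..n. \<bar>z i - z (i-1)\<bar>) + \<bar>v - u\<bar>"
  proof -
    have "(\<Sum>i=1..n. \<bar>z' i - z' (i-1)\<bar>) = (\<Sum>i=1..n. \<bar>z i - z (i-1)\<bar>)"
      by (rule sum.cong) (auto simp: z'_def)
    then show ?thesis using z(1) by (simp add: z'_def)
  qed
  show ?case
  proof (intro exI[of _ z'] conjI allI impI)
    show "z' (Suc n) = v" by (simp add: z'_def)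
  next
    fix i assume "i \<le> Suc n"
    then show "\<bar>z' i - y i\<bar> \<le> e/2" using z(2) Suc.prems by (auto simp: z'_def le_Suc_eq)
  next
    fix B assume B: "0 \<le> B \<and> (\<forall>k\<le>Suc n. s k + \<bar>v - y k\<bar> - e/2 \<le> B)"
    have Bn: "s n + \<bar>v - y n\<bar> - e/2 \<le> B" using B by simp
    have "(\<Sum>i=1..n. \<bar>z i - z (i-1)\<bar>) \<le> B - \<bar>v - u\<bar>"
    proof (rule z(3)[rule_format], intro conjI allI impI)
      show "0 \<le> B - \<bar>v - u\<bar>" using conjunct1[OF B] Bn s0[of n] e by (auto simp: u_def split: if_splits)
    next
      fix k assume k: "k \<le> n"
      have Bk: "s k + \<bar>v - y k\<bar> - e/2 \<le> B" using B k by simp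
      show "s k + \<bar>u - y k\<bar> - e/2 \<le> B - \<bar>v - u\<bar>"
      proof (cases "\<bar>v - y n\<bar> \<le> e/2")
        case True then show ?thesis using Bk by (simp add: u_def)
      next
        case False
        show ?thesis
        proof (cases "k = n")
          case True then show ?thesis using Bn False e by (auto simp: u_def)
        next
          case kn: False
          with k have "k < n" by simp
          from sge[OF this] have "s k + \<bar>y n - y k\<bar> - e \<le> s n" .
          then show ?thesis using Bk Bn False e by (auto simp: u_def split: if_splits)
        qed
      qed
    qed
    then show "(\<Sum>i=1..Suc n. \<bar>z' i - z' (i-1)\<bar>) \<le> B" using sumeq by simp
  qed
qed

lemma track_max:
  fixes y s :: "nat \<Rightarrow> real"
  assumes e: "0 \<le> e" and s0: "\<And>k. 0 \<le> s k"
    and sge: "\<And>j k. j < k \<Longrightarrow> s j + \<bar>y k - y j\<bar> - e \<le> s k"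
  shows "\<exists>z. (\<forall>i\<le>n. \<bar>z i - y i\<bar> \<le> e/2) \<and> (\<Sum>i=1..n. \<bar>z i - z (i-1)\<bar>) \<le> Max (s ` {..n})"
proof -
  define S where "S = Max (s ` {..n})"
  have sS: "\<And>k. k \<le> n \<Longrightarrow> s k \<le> S" unfolding S_def by (intro Max_ge) auto
  define L where "L = (\<lambda>k. y k - e/2 - (S - s k))"
  define v where "v = max (y n - e/2) (Max (L ` {..n}))"
  have Lle: "\<And>k j. k \<le> n \<Longrightarrow> j \<le> n \<Longrightarrow> L k \<le> y j + e/2 + (S - s j)"
  proof -
    fix k j assume kj: "k \<le> n" "j \<le> n"
    consider "k < j" | "k = j" | "j < k" by linarith
    then show "L k \<le> y j + e/2 + (S - s j)"
    proof cases
      case 1 then show ?thesis using sge[OF 1] sS[OF kj(1)] sS[OF kj(2)] unfolding L_def by linarith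
    next
      case 2 then show ?thesis using e sS[OF kj(2)] by (simp add: L_def)
    next
      case 3 then show ?thesis using sge[OF 3] sS[OF kj(1)] sS[OF kj(2)] unfolding L_def by linarith
    qed
  qed
  have yn: "\<And>j. j \<le> n \<Longrightarrow> y n - e/2 \<le> y j + e/2 + (S - s j)"
  proof -
    fix j assume j: "j \<le> n"
    show "y n - e/2 \<le> y j + e/2 + (S - s j)"
    proof (cases "j = n")
      case True then show ?thesis using e sS[of n] by simp
    next
      case False then have "j < n" using j by simp
      from sge[OF this] sS[of n] show ?thesis by linarith
    qed
  qed
  have vup: "\<And>j. j \<le> n \<Longrightarrow> v \<le> y j + e/2 + (S - s j)"
    unfolding v_def using Lle yn by (auto simp: Max_le_iff)
  have vlo: "\<And>k. k \<le> n \<Longrightarrow> L k \<le> v" unfolding v_def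
    by (rule max.coboundedI2, rule Max_ge) auto
  have vn: "\<bar>v - y n\<bar> \<le> e/2"
  proof -
    have "v \<le> y n + e/2 + (S - s n)" using vup by simp
    moreover have "\<And>k. k \<le> n \<Longrightarrow> L k \<le> y n + e/2"
    proof -
      fix k assume k: "k \<le> n"
      show "L k \<le> y n + e/2"
      proof (cases "k = n")
        case True then show ?thesis using sS[of n] e by (simp add: L_def)
      next
        case False then have "k < n" using k by simp
        from sge[OF this] sS[of n] show ?thesis unfolding L_def by linarith
      qed
    qed
    then have "v \<le> y n + e/2" unfolding v_def using e by (auto simp: Max_le_iff)
    moreover have "y n - e/2 \<le> v" unfolding v_def by simp
    ultimately show ?thesis by linarith
  qed
  from dp_track[where y=y and s=s and e=e and v=v and n=n, OF e s0 sge vn] obtain z where z: "\<forall>i\<le>n. \<bar>z i - y i\<bar> \<le> e/2"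
    "\<forall>B. 0 \<le> B \<and> (\<forall>k\<le>n. s k + \<bar>v - y k\<bar> - e/2 \<le> B) \<longrightarrow> (\<Sum>i=1..n. \<bar>z i - z (i-1)\<bar>) \<le> B"
    by blast
  have "(\<Sum>i=1..n. \<bar>z i - z (i-1)\<bar>) \<le> S"
  proof (rule z(2)[rule_format], intro conjI allI impI)
    show "0 \<le> S" using sS[of 0] s0[of 0] by simp
  next
    fix k assume k: "k \<le> n"
    show "s k + \<bar>v - y k\<bar> - e/2 \<le> S" using vup[OF k] vlo[OF k] unfolding L_def by linarith
  qed
  then show ?thesis using z(1) unfolding S_def by blast
qed

lemma TV_upper:
  assumes "\<forall>i<m. c \<le> \<sigma> i \<and> \<sigma> i \<le> d" "\<forall>i. Suc i < m \<longrightarrow> \<sigma> i < \<sigma> (Suc i)"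
  shows "ereal (\<Sum>i\<in>{1..<m}. max (\<bar>h (\<sigma> i) - h (\<sigma> (i - 1))\<bar> - e) 0) \<le> TV h c d e"
  unfolding TV_def by (rule Sup_upper) (use assms in blast)

lemma TV_nonneg: "0 \<le> TV h c d e"
  using TV_upper[of 0 c "\<lambda>_. c" d h e] by (simp add: zero_ereal_def)

lemma TV_antimono:
  assumes "e1 \<le> e2" shows "TV h c d e2 \<le> TV h c d e1"
  unfolding TV_def
proof (rule Sup_least)
  fix u assume "u \<in> {ereal (\<Sum>i\<in>{1..<m}. max (\<bar>h (s i) - h (s (i - 1))\<bar> - e2) 0) | m s.
       (\<forall>i<m. c \<le> s i \<and> s i \<le> d) \<and> (\<forall>i. Suc i < m \<longrightarrow> s i < s (Suc i))}"
  then obtain m s where ms: "u = ereal (\<Sum>i\<in>{1..<m}. max (\<bar>h (s i) - h (s (i - 1))\<bar> - e2) 0)"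
    "(\<forall>i<m. c \<le> s i \<and> s i \<le> d)" "(\<forall>i. Suc i < m \<longrightarrow> s i < s (Suc i))" by blast
  have "u \<le> ereal (\<Sum>i\<in>{1..<m}. max (\<bar>h (s i) - h (s (i - 1))\<bar> - e1) 0)"
    unfolding ms(1) using assms by (auto intro!: sum_mono)
  also have "\<dots> \<le> TV h c d e1" by (rule TV_upper) (use ms in auto)
  finally show "u \<le> Sup {ereal (\<Sum>i\<in>{1..<m}. max (\<bar>h (s i) - h (s (i - 1))\<bar> - e1) 0) | m s.
       (\<forall>i<m. c \<le> s i \<and> s i \<le> d) \<and> (\<forall>i. Suc i < m \<longrightarrow> s i < s (Suc i))}" unfolding TV_def .
qed

lemma track_TV:
  fixes h :: "real \<Rightarrow> real" and x :: "nat \<Rightarrow> real"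
  assumes e: "0 \<le> e" and mono: "\<And>i j. i \<le> j \<Longrightarrow> j \<le> n \<Longrightarrow> x i \<le> x j"
    and rng: "\<And>i. i \<le> n \<Longrightarrow> c \<le> x i \<and> x i \<le> d"
  shows "\<exists>z. (\<forall>i\<le>n. \<bar>z i - h (x i)\<bar> \<le> e/2) \<and> ereal (\<Sum>i=1..n. \<bar>z i - z (i-1)\<bar>) \<le> TV h c d e"
proof -
  let ?y = "\<lambda>i. h (x i)"
  let ?s = "sdp ?y e"
  have s0: "\<And>k. 0 \<le> ?s k" by (rule sdp_nonneg)
  have sge: "\<And>j k. j < k \<Longrightarrow> ?s j + \<bar>?y k - ?y j\<bar> - e \<le> ?s k"
  proof -
    fix j k :: nat assume "j < k"
    from sdp_ge[OF this, of ?y e] show "?s j + \<bar>?y k - ?y j\<bar> - e \<le> ?s k" by linarith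
  qed
  from track_max[where y="?y" and s="?s" and e=e and n=n, OF e s0 sge] obtain z where
    z: "\<forall>i\<le>n. \<bar>z i - ?y i\<bar> \<le> e/2" "(\<Sum>i=1..n. \<bar>z i - z (i-1)\<bar>) \<le> Max (?s ` {..n})" by blast
  have "Max (?s ` {..n}) \<in> ?s ` {..n}" by (intro Max_in) auto
  then obtain k where k: "k \<le> n" "Max (?s ` {..n}) = ?s k" by (metis atMost_iff imageE)
  from sdp_real[where e=e and n=n and x=x and c=c and h=h and k=k, OF e mono] rng k(1) obtain m \<sigma> where
    ms: "0 < m" "\<sigma> (m-1) = x k" "\<forall>i<m. c \<le> \<sigma> i \<and> \<sigma> i \<le> x k"
     "\<forall>i. Suc i < m \<longrightarrow> \<sigma> i < \<sigma> (Suc i)"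
     "?s k \<le> (\<Sum>i\<in>{1..<m}. max (\<bar>h (\<sigma> i) - h (\<sigma> (i-1))\<bar> - e) 0)" by blast
  have xkd: "x k \<le> d" using rng k(1) by blast
  have "ereal (\<Sum>i=1..n. \<bar>z i - z (i-1)\<bar>) \<le> ereal (\<Sum>i\<in>{1..<m}. max (\<bar>h (\<sigma> i) - h (\<sigma> (i-1))\<bar> - e) 0)"
    using z(2) k(2) ms(5) by simp
  also have "\<dots> \<le> TV h c d e" by (rule TV_upper) (use ms xkd in force)+
  finally show ?thesis using z(1) by blast
qed

lemma tendsto_local_bound:
  fixes f :: "real \<Rightarrow> real"
  assumes "(f \<longlongrightarrow> l) (at x within S)"
  shows "\<exists>e>0. \<forall>y\<in>S. y \<noteq> x \<and> dist y x < e \<longrightarrow> \<bar>f y\<bar> \<le> \<bar>l\<bar> + 1"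
proof -
  have "eventually (\<lambda>y. dist (f y) l < 1) (at x within S)"
    using tendstoD[OF assms zero_less_one] .
  then obtain e where e: "e > 0" "\<forall>y\<in>S. y \<noteq> x \<and> dist y x < e \<longrightarrow> dist (f y) l < 1"
    unfolding eventually_at by blast
  show ?thesis
  proof (intro exI[of _ e] conjI ballI impI)
    fix y assume "y \<in> S" "y \<noteq> x \<and> dist y x < e"
    then have "dist (f y) l < 1" using e by blast
    then show "\<bar>f y\<bar> \<le> \<bar>l\<bar> + 1" by (simp add: dist_real_def)
  qed (use e in auto)
qed

lemma regulated_local:
  fixes f :: "real \<Rightarrow> real"
  assumes reg: "regulated f a b" and x: "x \<in> {a..b}"
  shows "\<exists>e>0. \<exists>B. \<forall>y\<in>{a..b}. dist y x < e \<longrightarrow> \<bar>f y\<bar> \<le> B"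
proof -
  from reg obtain la lb where la: "(f \<longlongrightarrow> la) (at a within {a<..b})"
    and lb: "(f \<longlongrightarrow> lb) (at b within {a..<b})"
    and int: "\<forall>x\<in>{a<..<b}. (\<exists>l. (f \<longlongrightarrow> l) (at_left x)) \<and> (\<exists>l. (f \<longlongrightarrow> l) (at_right x))"
    unfolding regulated_def by blast
  consider "x = a" | "x = b" | "x \<in> {a<..<b}" using x by force
  then show ?thesis
  proof cases
    case 1
    from tendsto_local_bound[OF la] obtain e where e: "e > 0"
      "\<forall>y\<in>{a<..b}. y \<noteq> a \<and> dist y a < e \<longrightarrow> \<bar>f y\<bar> \<le> \<bar>la\<bar> + 1" by blast
    show ?thesis
    proof (rule exI[of _ e], intro conjI exI[of _ "max (\<bar>la\<bar> + 1) \<bar>f a\<bar>"] ballI impI)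
      fix y assume y: "y \<in> {a..b}" "dist y x < e"
      show "\<bar>f y\<bar> \<le> max (\<bar>la\<bar> + 1) \<bar>f a\<bar>"
      proof (cases "y = a")
        case False then show ?thesis using y e 1 by force
      qed simp
    qed (use e in simp)
  next
    case 2
    from tendsto_local_bound[OF lb] obtain e where e: "e > 0"
      "\<forall>y\<in>{a..<b}. y \<noteq> b \<and> dist y b < e \<longrightarrow> \<bar>f y\<bar> \<le> \<bar>lb\<bar> + 1" by blast
    show ?thesis
    proof (rule exI[of _ e], intro conjI exI[of _ "max (\<bar>lb\<bar> + 1) \<bar>f b\<bar>"] ballI impI)
      fix y assume y: "y \<in> {a..b}" "dist y x < e"
      show "\<bar>f y\<bar> \<le> max (\<bar>lb\<bar> + 1) \<bar>f b\<bar>"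
      proof (cases "y = b")
        case False then show ?thesis using y e 2 by force
      qed simp
    qed (use e in simp)
  next
    case 3
    with int obtain l1 l2 where l1: "(f \<longlongrightarrow> l1) (at x within {..<x})"
      and l2: "(f \<longlongrightarrow> l2) (at x within {x<..})" by blast
    from tendsto_local_bound[OF l1] obtain e1 where e1: "e1 > 0"
      "\<forall>y\<in>{..<x}. y \<noteq> x \<and> dist y x < e1 \<longrightarrow> \<bar>f y\<bar> \<le> \<bar>l1\<bar> + 1" by blast
    from tendsto_local_bound[OF l2] obtain e2 where e2: "e2 > 0"
      "\<forall>y\<in>{x<..}. y \<noteq> x \<and> dist y x < e2 \<longrightarrow> \<bar>f y\<bar> \<le> \<bar>l2\<bar> + 1" by blast
    show ?thesis
    proof (rule exI[of _ "min e1 e2"], intro conjI exI[of _ "max (max (\<bar>l1\<bar> + 1) (\<bar>l2\<bar> + 1)) \<bar>f x\<bar>"] ballI impI)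
      fix y assume y: "y \<in> {a..b}" "dist y x < min e1 e2"
      consider "y < x" | "y = x" | "y > x" by linarith
      then show "\<bar>f y\<bar> \<le> max (max (\<bar>l1\<bar> + 1) (\<bar>l2\<bar> + 1)) \<bar>f x\<bar>"
      proof cases
        case 1 then have "\<bar>f y\<bar> \<le> \<bar>l1\<bar> + 1" using y e1 by force
        then show ?thesis by linarith
      next
        case 3 then have "\<bar>f y\<bar> \<le> \<bar>l2\<bar> + 1" using y e2 by force
        then show ?thesis by linarith
      qed simp
    qed (use e1 e2 in simp)
  qed
qed

lemma regulated_bounded:
  fixes f :: "real \<Rightarrow> real"
  assumes reg: "regulated f a b"
  shows "\<exists>B. \<forall>s\<in>{a..b}. \<bar>f s\<bar> \<le> B"
proof -
  have "\<forall>x\<in>{a..b}. \<exists>e. e > 0 \<and> (\<exists>B. \<forall>y\<in>{a..b}. dist y x < e \<longrightarrow> \<bar>f y\<bar> \<le> B)"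
    using regulated_local[OF reg] by blast
  then obtain E where E: "\<forall>x\<in>{a..b}. E x > 0 \<and> (\<exists>B. \<forall>y\<in>{a..b}. dist y x < E x \<longrightarrow> \<bar>f y\<bar> \<le> B)"
    by metis
  then obtain BB where BB: "\<forall>x\<in>{a..b}. E x > 0 \<and> (\<forall>y\<in>{a..b}. dist y x < E x \<longrightarrow> \<bar>f y\<bar> \<le> BB x)"
    by metis
  have cov: "{a..b} \<subseteq> (\<Union>x\<in>{a..b}. ball x (E x))" using BB by force
  obtain C where C: "C \<subseteq> {a..b}" "finite C" "{a..b} \<subseteq> (\<Union>x\<in>C. ball x (E x))"
    by (rule compactE_image[OF compact_Icc _ cov]) auto
  show ?thesis
  proof (intro exI[of _ "\<Sum>x\<in>C. \<bar>BB x\<bar>"] ballI)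
    fix s assume s: "s \<in> {a..b}"
    with C(3) obtain x where x: "x \<in> C" "s \<in> ball x (E x)" by blast
    have "\<bar>f s\<bar> \<le> BB x" using BB x C(1) s by (auto simp: dist_commute)
    also have "\<dots> \<le> \<bar>BB x\<bar>" by simp
    also have "\<dots> \<le> (\<Sum>x\<in>C. \<bar>BB x\<bar>)" by (rule member_le_sum) (use x C in auto)
    finally show "\<bar>f s\<bar> \<le> (\<Sum>x\<in>C. \<bar>BB x\<bar>)" .
  qed
qed

lemma telescope: fixes V :: "nat \<Rightarrow> real" and n :: nat shows "(\<Sum>i=1..n. (V i - V (i-1))) = V n - V 0"
  by (induction n) auto

lemma prod_bound:
  fixes a b :: "nat \<Rightarrow> real"
  assumes "\<forall>i\<in>{1..n}. \<bar>a i\<bar> \<le> A"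
  shows "\<bar>\<Sum>i=1..n. a i * b i\<bar> \<le> A * (\<Sum>i=1..n. \<bar>b i\<bar>)"
proof -
  have "\<bar>\<Sum>i=1..n. a i * b i\<bar> \<le> (\<Sum>i=1..n. \<bar>a i * b i\<bar>)" by (rule sum_abs)
  also have "\<dots> \<le> (\<Sum>i=1..n. A * \<bar>b i\<bar>)"
    using assms by (intro sum_mono) (auto simp: abs_mult intro: mult_right_mono)
  also have "\<dots> = A * (\<Sum>i=1..n. \<bar>b i\<bar>)" by (simp add: sum_distrib_left)
  finally show ?thesis .
qed

lemma abel_identity:
  fixes V H :: "nat \<Rightarrow> real"
  shows "(\<Sum>i=1..n. (V i - V 0) * (H i - H (i-1))) = (V n - V 0) * H n - (\<Sum>i=1..n. (V i - V (i-1)) * H (i-1))"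
  by (induction n) (auto simp: algebra_simps)

lemma abel_bound:
  fixes V H :: "nat \<Rightarrow> real"
  assumes H: "\<forall>i\<le>n. \<bar>H i\<bar> \<le> e/2"
  shows "\<bar>\<Sum>i=1..n. (V i - V 0) * (H i - H (i-1))\<bar> \<le> e * (\<Sum>i=1..n. \<bar>V i - V (i-1)\<bar>)"
proof -
  let ?\<beta> = "\<Sum>i=1..n. \<bar>V i - V (i-1)\<bar>"
  have vn: "\<bar>V n - V 0\<bar> \<le> ?\<beta>"
    using telescope[where n=n and V=V] sum_abs[of "\<lambda>i. V i - V (i-1)" "{1..n}"] by simp
  have h1: "\<bar>(V n - V 0) * H n\<bar> \<le> ?\<beta> * (e/2)"
    unfolding abs_mult by (rule mult_mono) (use vn H in auto)
  have h2: "\<bar>\<Sum>i=1..n. H (i-1) * (V i - V (i-1))\<bar> \<le> (e/2) * ?\<beta>"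
    by (rule prod_bound) (use H in auto)
  have eq: "(\<Sum>i=1..n. (V i - V (i-1)) * H (i-1)) = (\<Sum>i=1..n. H (i-1) * (V i - V (i-1)))"
    by (simp add: mult.commute)
  have tri: "\<bar>(V n - V 0) * H n - (\<Sum>i=1..n. (V i - V (i-1)) * H (i-1))\<bar>
     \<le> \<bar>(V n - V 0) * H n\<bar> + \<bar>\<Sum>i=1..n. (V i - V (i-1)) * H (i-1)\<bar>" by (rule abs_triangle_ineq4)
  have ar: "?\<beta> * (e/2) + e/2 * ?\<beta> = e * ?\<beta>" by (simp add: algebra_simps)
  show ?thesis unfolding abel_identity using h1 h2 tri ar unfolding eq by linarith
qed

lemma step_identity:
  fixes F G Z Zt W Wt :: "nat \<Rightarrow> real"
  shows "(\<Sum>i=1..n. (F i - Wt i + Wt 0) * ((G i - Zt i) - (G (i-1) - Zt (i-1))))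
  = (\<Sum>i=1..n. (F i - Wt i + Wt 0) * ((Z i - Zt i) - (Z (i-1) - Zt (i-1))))
  + (\<Sum>i=1..n. ((W i - Wt i) - (W 0 - Wt 0)) * ((G i - Z i) - (G (i-1) - Z (i-1))))
  + (\<Sum>i=1..n. (F i - W i + W 0) * ((G i - Z i) - (G (i-1) - Z (i-1))))"
  unfolding sum.distrib[symmetric] by (rule sum.cong) (auto simp: algebra_simps)

definition tl0 :: "(nat \<Rightarrow> nat \<Rightarrow> real) \<Rightarrow> nat \<Rightarrow> nat \<Rightarrow> real" where
  "tl0 Z k = (if k = 0 then (\<lambda>_. 0) else Z (k-1))"

definition Sk where "Sk n F G Z W k = (\<Sum>i=1..n. (F i - tl0 W k i + tl0 W k 0) * ((G i - tl0 Z k i) - (G (i-1) - tl0 Z k (i-1))))"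
definition T1 where "T1 n F Z W k = (\<Sum>i=1..n. (F i - tl0 W k i + tl0 W k 0) * ((Z k i - tl0 Z k i) - (Z k (i-1) - tl0 Z k (i-1))))"
definition T2 where "T2 n G Z W k = (\<Sum>i=1..n. ((W k i - tl0 W k i) - (W k 0 - tl0 W k 0)) * ((G i - Z k i) - (G (i-1) - Z k (i-1))))"

lemma decomp: "Sk n F G Z W 0 = (\<Sum>k=0..r. T1 n F Z W k + T2 n G Z W k) + Sk n F G Z W (Suc r)"
proof -
  have step: "\<And>k. Sk n F G Z W k = T1 n F Z W k + T2 n G Z W k + Sk n F G Z W (Suc k)"
    unfolding Sk_def T1_def T2_def using step_identity[where n=n and F=F and Wt="tl0 W k" and G=G and Zt="tl0 Z k" and Z="Z k" and W="W k" for k]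
    by (simp add: tl0_def)
  show ?thesis
  proof (induction r)
    case 0 then show ?case using step[of 0] by simp
  next
    case (Suc r) then show ?case using step[of "Suc r"] by simp
  qed
qed

lemma chain_le:
  fixes u :: "nat \<Rightarrow> real"
  assumes "\<forall>k<r. u (Suc k) \<le> u k" "k \<le> j" "j \<le> r"
  shows "u j \<le> u k"
proof -
  let ?u = "\<lambda>n. u (min n r)"
  have "\<And>n. ?u (Suc n) \<le> ?u n"
  proof -
    fix n show "?u (Suc n) \<le> ?u n"
    proof (cases "n < r")
      case True then show ?thesis using assms(1) by (simp add: min_def)
    next
      case False then show ?thesis by (simp add: min_def)
    qed
  qed
  from lift_Suc_antimono_le[of ?u, OF this assms(2)] show ?thesis using assms(2,3) by (simp add: min_def)
qed

lemma ereal_bound: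
  fixes C x y :: real and T :: ereal
  assumes "0 \<le> C" "0 \<le> x" "0 \<le> y" "ereal x \<le> T" "ereal y \<le> T" "k = 0 \<Longrightarrow> y = 0"
  shows "ereal (C * (x + y)) \<le> ereal (2 ^ k * C) * T"
proof (cases T)
  case (real t)
  then have xt: "x \<le> t" "y \<le> t" using assms by auto
  have "C * (x + y) \<le> 2 ^ k * C * t"
  proof (cases "k = 0")
    case True then show ?thesis using assms xt by (simp add: mult_left_mono)
  next
    case False
    then have "(2::real) \<le> 2 ^ k" by (metis One_nat_def Suc_leI neq0_conv power_increasing power_one_right rel_simps(76) two_realpow_ge_one zero_less_numeral)
    moreover have "0 \<le> t" using xt assms by linarith
    ultimately have "2 * t \<le> 2 ^ k * t" by (intro mult_right_mono) auto
    then have "x + y \<le> 2 ^ k * t" using xt by linarith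
    then have "C * (x + y) \<le> C * (2 ^ k * t)" using assms by (intro mult_left_mono) auto
    then show ?thesis by (simp add: algebra_simps)
  qed
  then show ?thesis using real by simp
next
  case PInf
  show ?thesis
  proof (cases "C = 0")
    case True then show ?thesis by (simp add: zero_ereal_def[symmetric])
  next
    case False then have "0 < 2 ^ k * C" using assms by simp
    then show ?thesis using PInf by simp
  qed
next
  case MInf then show ?thesis using assms by simp
qed


lemma abs_help:
  fixes w x w0 x0 e :: real
  assumes "\<bar>w - x\<bar> \<le> e/2" "\<bar>w0 - x0\<bar> \<le> e/2" "x0 = 0"
  shows "\<bar>x - w + w0\<bar> \<le> e"
  using assms by arith

lemma var_tl0:
  fixes X :: "nat \<Rightarrow> nat \<Rightarrow> real"
  shows "(\<Sum>i=1..n. \<bar>(X k i - tl0 X k i) - (X k (i-1) - tl0 X k (i-1))\<bar>)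
    \<le> (\<Sum>i=1..n. \<bar>X k i - X k (i-1)\<bar>) + (if k = 0 then 0 else (\<Sum>i=1..n. \<bar>X (k-1) i - X (k-1) (i-1)\<bar>))"
proof (cases "k = 0")
  case True then show ?thesis by (simp add: tl0_def)
next
  case False
  have "(\<Sum>i=1..n. \<bar>(X k i - X (k-1) i) - (X k (i-1) - X (k-1) (i-1))\<bar>)
     \<le> (\<Sum>i=1..n. \<bar>X k i - X k (i-1)\<bar> + \<bar>X (k-1) i - X (k-1) (i-1)\<bar>)"
    by (intro sum_mono) linarith
  then show ?thesis using False by (simp add: tl0_def sum.distrib)
qed

theorem lemma1:
  fixes f g :: "real \<Rightarrow> real" and a b c d :: real and n r :: nat
    and t \<xi> :: "nat \<Rightarrow> real" and \<delta> \<epsilon> :: "nat \<Rightarrow> real"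
  assumes "regulated f a b" and "regulated g a b"
    and "a \<le> c" and "d \<le> b"
    and "t 0 = c" and "t n = d" and "\<forall>i<n. t i < t (Suc i)"
    and "\<xi> 0 = c" and "\<forall>i\<in>{1..n}. t (i - 1) \<le> \<xi> i \<and> \<xi> i \<le> t i"
    and "\<forall>k<r. \<delta> (Suc k) \<le> \<delta> k" and "\<delta> r \<ge> 0"
    and "\<forall>k<r. \<epsilon> (Suc k) \<le> \<epsilon> k" and "\<epsilon> r \<ge> 0"
  shows "ereal \<bar>(\<Sum>i=1..n. f (\<xi> i) * (g (t i) - g (t (i - 1)))) - f c * (g d - g c)\<bar>
     \<le> (\<Sum>k=0..r. ereal (2 ^ k *
             (if k = 0 then (SUP s\<in>{c..d}. \<bar>f s - f c\<bar>) else \<delta> (k - 1))) * TV g c d (\<epsilon> k))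
       + (\<Sum>k=0..r. ereal (2 ^ k * \<epsilon> k) * TV f c d (\<delta> k))
       + ereal (real n * \<delta> r * \<epsilon> r)"
proof -
  have tmono: "\<And>i j. i \<le> j \<Longrightarrow> j \<le> n \<Longrightarrow> t i \<le> t j"
  proof -
    fix i j :: nat assume ij: "i \<le> j" "j \<le> n"
    have "\<forall>k<n. - t (Suc k) \<le> - t k" using assms(7) by (simp add: order_less_imp_le)
    from chain_le[OF this ij] show "t i \<le> t j" by simp
  qed
  have trng: "\<And>i. i \<le> n \<Longrightarrow> c \<le> t i \<and> t i \<le> d"
    using tmono[of 0] tmono[of _ n] assms(5,6) by auto
  have xit: "\<And>i. i \<le> n \<Longrightarrow> \<xi> i \<le> t i"
  proof -
    fix i assume "i \<le> n" then show "\<xi> i \<le> t i"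
      using assms(5,8,9) by (cases "i = 0") auto
  qed
  have xisuc: "\<forall>k<n. - \<xi> (Suc k) \<le> - \<xi> k"
  proof (intro allI impI)
    fix k assume k: "k < n"
    have "Suc k \<in> {1..n}" using k by simp
    with assms(9) have "t (Suc k - 1) \<le> \<xi> (Suc k)" by blast
    then have "t k \<le> \<xi> (Suc k)" by simp
    then show "- \<xi> (Suc k) \<le> - \<xi> k" using xit[of k] k by simp
  qed
  have ximono: "\<And>i j. i \<le> j \<Longrightarrow> j \<le> n \<Longrightarrow> \<xi> i \<le> \<xi> j"
  proof -
    fix i j :: nat assume ij: "i \<le> j" "j \<le> n"
    from chain_le[OF xisuc ij] show "\<xi> i \<le> \<xi> j" by simp
  qed
  have xirng: "\<And>i. i \<le> n \<Longrightarrow> c \<le> \<xi> i \<and> \<xi> i \<le> d"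
  proof -
    fix i assume i: "i \<le> n"
    from ximono[of 0 i] xit[OF i] trng[OF i] assms(8) i show "c \<le> \<xi> i \<and> \<xi> i \<le> d" by simp
  qed
  have eps0: "\<And>k. k \<le> r \<Longrightarrow> 0 \<le> \<epsilon> k"
  proof -
    fix k assume k: "k \<le> r"
    from chain_le[OF assms(12) k order_refl] assms(13) show "0 \<le> \<epsilon> k" by simp
  qed
  have del0: "\<And>k. k \<le> r \<Longrightarrow> 0 \<le> \<delta> k"
  proof -
    fix k assume k: "k \<le> r"
    from chain_le[OF assms(10) k order_refl] assms(11) show "0 \<le> \<delta> k" by simp
  qed
  have epsm: "\<And>k. 0 < k \<Longrightarrow> k \<le> r \<Longrightarrow> \<epsilon> k \<le> \<epsilon> (k-1)"
  proof -
    fix k :: nat assume k: "0 < k" "k \<le> r"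
    then have "k - 1 < r" by simp
    with assms(12) have "\<epsilon> (Suc (k-1)) \<le> \<epsilon> (k-1)" by blast
    then show "\<epsilon> k \<le> \<epsilon> (k-1)" using k by simp
  qed
  have delm: "\<And>k. 0 < k \<Longrightarrow> k \<le> r \<Longrightarrow> \<delta> k \<le> \<delta> (k-1)"
  proof -
    fix k :: nat assume k: "0 < k" "k \<le> r"
    then have "k - 1 < r" by simp
    with assms(10) have "\<delta> (Suc (k-1)) \<le> \<delta> (k-1)" by blast
    then show "\<delta> k \<le> \<delta> (k-1)" using k by simp
  qed
  define F where "F = (\<lambda>i. f (\<xi> i) - f c)"
  define G where "G = (\<lambda>i. g (t i))"
  have "\<forall>k. \<exists>z. k \<le> r \<longrightarrow> (\<forall>i\<le>n. \<bar>z i - G i\<bar> \<le> \<epsilon> k / 2) \<and>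
      ereal (\<Sum>i=1..n. \<bar>z i - z (i-1)\<bar>) \<le> TV g c d (\<epsilon> k)"
  proof
    fix k show "\<exists>z. k \<le> r \<longrightarrow> (\<forall>i\<le>n. \<bar>z i - G i\<bar> \<le> \<epsilon> k / 2) \<and>
      ereal (\<Sum>i=1..n. \<bar>z i - z (i-1)\<bar>) \<le> TV g c d (\<epsilon> k)"
    proof (cases "k \<le> r")
      case True
      from track_TV[where h=g and x=t and n=n and c=c and d=d, OF eps0[OF True] tmono trng]
      obtain z where "(\<forall>i\<le>n. \<bar>z i - g (t i)\<bar> \<le> \<epsilon> k / 2)" "ereal (\<Sum>i=1..n. \<bar>z i - z (i-1)\<bar>) \<le> TV g c d (\<epsilon> k)"
        by blast
      then show ?thesis unfolding G_def by blast
    qed simp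
  qed
  from choice[OF this] obtain Z where Z: "\<And>k. k \<le> r \<Longrightarrow> (\<forall>i\<le>n. \<bar>Z k i - G i\<bar> \<le> \<epsilon> k / 2) \<and>
      ereal (\<Sum>i=1..n. \<bar>Z k i - Z k (i-1)\<bar>) \<le> TV g c d (\<epsilon> k)" by blast
  have "\<forall>k. \<exists>z. k \<le> r \<longrightarrow> (\<forall>i\<le>n. \<bar>z i - f (\<xi> i)\<bar> \<le> \<delta> k / 2) \<and>
      ereal (\<Sum>i=1..n. \<bar>z i - z (i-1)\<bar>) \<le> TV f c d (\<delta> k)"
  proof
    fix k show "\<exists>z. k \<le> r \<longrightarrow> (\<forall>i\<le>n. \<bar>z i - f (\<xi> i)\<bar> \<le> \<delta> k / 2) \<and>
      ereal (\<Sum>i=1..n. \<bar>z i - z (i-1)\<bar>) \<le> TV f c d (\<delta> k)"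
    proof (cases "k \<le> r")
      case True
      from track_TV[where h=f and x=\<xi> and n=n and c=c and d=d, OF del0[OF True] ximono xirng]
      show ?thesis by blast
    qed simp
  qed
  from choice[OF this] obtain W0 where W0: "\<And>k. k \<le> r \<Longrightarrow> (\<forall>i\<le>n. \<bar>W0 k i - f (\<xi> i)\<bar> \<le> \<delta> k / 2) \<and>
      ereal (\<Sum>i=1..n. \<bar>W0 k i - W0 k (i-1)\<bar>) \<le> TV f c d (\<delta> k)" by blast
  define W where "W = (\<lambda>k i. W0 k i - f c)"
  have Wap: "\<And>k i. k \<le> r \<Longrightarrow> i \<le> n \<Longrightarrow> \<bar>W k i - F i\<bar> \<le> \<delta> k / 2"
    using W0 unfolding W_def F_def by auto
  have Zap: "\<And>k i. k \<le> r \<Longrightarrow> i \<le> n \<Longrightarrow> \<bar>Z k i - G i\<bar> \<le> \<epsilon> k / 2"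
    using Z by auto
  define av where "av = (\<lambda>k. \<Sum>i=1..n. \<bar>Z k i - Z k (i-1)\<bar>)"
  define bv where "bv = (\<lambda>k. \<Sum>i=1..n. \<bar>W k i - W k (i-1)\<bar>)"
  have aTV: "\<And>k. k \<le> r \<Longrightarrow> ereal (av k) \<le> TV g c d (\<epsilon> k)" using Z unfolding av_def by blast
  have bTV: "\<And>k. k \<le> r \<Longrightarrow> ereal (bv k) \<le> TV f c d (\<delta> k)" using W0 unfolding bv_def W_def by auto
  have av0: "\<And>k. 0 \<le> av k" unfolding av_def by (simp add: sum_nonneg)
  have bv0: "\<And>k. 0 \<le> bv k" unfolding bv_def by (simp add: sum_nonneg)
  define D where "D = (SUP s\<in>{c..d}. \<bar>f s - f c\<bar>)"
  obtain B where B: "\<forall>s\<in>{a..b}. \<bar>f s\<bar> \<le> B" using regulated_bounded[OF assms(1)] by blast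
  have bdd: "bdd_above ((\<lambda>s. \<bar>f s - f c\<bar>) ` {c..d})"
  proof (rule bdd_aboveI2)
    fix s assume "s \<in> {c..d}"
    then have "\<bar>f s\<bar> \<le> B" "\<bar>f c\<bar> \<le> B" using B assms(3,4) trng[of 0] by auto
    then show "\<bar>f s - f c\<bar> \<le> 2 * B" by linarith
  qed
  have FD: "\<And>i. i \<le> n \<Longrightarrow> \<bar>F i\<bar> \<le> D"
    unfolding F_def D_def by (rule cSUP_upper[OF _ bdd]) (use xirng in auto)
  have F0: "F 0 = 0" unfolding F_def using assms(8) by simp
  have D0: "0 \<le> D" using FD[of 0] F0 by simp
  define Dk where "Dk = (\<lambda>k. if k = 0 then D else \<delta> (k-1))"
  have Dk0: "\<And>k. k \<le> r \<Longrightarrow> 0 \<le> Dk k" unfolding Dk_def using D0 del0 by auto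
  have lhs: "(\<Sum>i=1..n. f (\<xi> i) * (g (t i) - g (t (i - 1)))) - f c * (g d - g c) = Sk n F G Z W 0"
  proof -
    have "Sk n F G Z W 0 = (\<Sum>i=1..n. (f (\<xi> i) - f c) * (G i - G (i-1)))"
      unfolding Sk_def tl0_def F_def by simp
    also have "\<dots> = (\<Sum>i=1..n. f (\<xi> i) * (G i - G (i-1))) - (\<Sum>i=1..n. f c * (G i - G (i-1)))"
      by (subst sum_subtractf[symmetric]) (simp add: left_diff_distrib)
    also have "(\<Sum>i=1..n. f c * (G i - G (i-1))) = f c * (\<Sum>i=1..n. (G i - G (i-1)))"
      by (rule sum_distrib_left[symmetric])
    also have "(\<Sum>i=1..n. (G i - G (i-1))) = g d - g c" using telescope[where V=G and n=n] assms(5,6)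
      unfolding G_def by simp
    finally show ?thesis unfolding G_def by simp
  qed
  have T1b: "\<And>k. k \<le> r \<Longrightarrow> \<bar>T1 n F Z W k\<bar> \<le> Dk k * (av k + (if k = 0 then 0 else av (k-1)))"
  proof -
    fix k assume k: "k \<le> r"
    have A: "\<forall>i\<in>{1..n}. \<bar>F i - tl0 W k i + tl0 W k 0\<bar> \<le> Dk k"
    proof
      fix i assume i: "i \<in> {1..n}"
      show "\<bar>F i - tl0 W k i + tl0 W k 0\<bar> \<le> Dk k"
      proof (cases "k = 0")
        case True then show ?thesis using FD i by (simp add: tl0_def Dk_def)
      next
        case False
        have "\<bar>W (k-1) i - F i\<bar> \<le> \<delta> (k-1) / 2" "\<bar>W (k-1) 0 - F 0\<bar> \<le> \<delta> (k-1) / 2"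
          using Wap[of "k-1" i] Wap[of "k-1" 0] k i by auto
        from abs_help[OF this F0] show ?thesis using False by (simp add: tl0_def Dk_def)
      qed
    qed
    have "\<bar>T1 n F Z W k\<bar> \<le> Dk k * (\<Sum>i=1..n. \<bar>(Z k i - tl0 Z k i) - (Z k (i-1) - tl0 Z k (i-1))\<bar>)"
      unfolding T1_def by (rule prod_bound[OF A])
    also have "\<dots> \<le> Dk k * (av k + (if k = 0 then 0 else av (k-1)))"
      using var_tl0[where n=n and X=Z and k=k] Dk0[OF k] unfolding av_def by (intro mult_left_mono) auto
    finally show "\<bar>T1 n F Z W k\<bar> \<le> Dk k * (av k + (if k = 0 then 0 else av (k-1)))" .
  qed
  have T2b: "\<And>k. k \<le> r \<Longrightarrow> \<bar>T2 n G Z W k\<bar> \<le> \<epsilon> k * (bv k + (if k = 0 then 0 else bv (k-1)))"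
  proof -
    fix k assume k: "k \<le> r"
    have H: "\<forall>i\<le>n. \<bar>G i - Z k i\<bar> \<le> \<epsilon> k / 2" using Zap[OF k] by (simp add: abs_minus_commute)
    have "\<bar>T2 n G Z W k\<bar> \<le> \<epsilon> k * (\<Sum>i=1..n. \<bar>(W k i - tl0 W k i) - (W k (i-1) - tl0 W k (i-1))\<bar>)"
      unfolding T2_def using abel_bound[where V="\<lambda>i. W k i - tl0 W k i" and H="\<lambda>i. G i - Z k i", OF H] by simp
    also have "\<dots> \<le> \<epsilon> k * (bv k + (if k = 0 then 0 else bv (k-1)))"
      using var_tl0[where n=n and X=W and k=k] eps0[OF k] unfolding bv_def by (intro mult_left_mono) auto
    finally show "\<bar>T2 n G Z W k\<bar> \<le> \<epsilon> k * (bv k + (if k = 0 then 0 else bv (k-1)))" .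
  qed
  have Sb: "\<bar>Sk n F G Z W (Suc r)\<bar> \<le> real n * \<delta> r * \<epsilon> r"
  proof -
    have A: "\<forall>i\<in>{1..n}. \<bar>F i - W r i + W r 0\<bar> \<le> \<delta> r"
    proof
      fix i assume i: "i \<in> {1..n}"
      have "\<bar>W r i - F i\<bar> \<le> \<delta> r / 2" "\<bar>W r 0 - F 0\<bar> \<le> \<delta> r / 2"
        using Wap[of r i] Wap[of r 0] i by auto
      from abs_help[OF this F0] show "\<bar>F i - W r i + W r 0\<bar> \<le> \<delta> r" .
    qed
    have "\<bar>Sk n F G Z W (Suc r)\<bar> \<le> \<delta> r * (\<Sum>i=1..n. \<bar>(G i - Z r i) - (G (i-1) - Z r (i-1))\<bar>)"
    proof -
      have "Sk n F G Z W (Suc r) = (\<Sum>i=1..n. (F i - W r i + W r 0) * ((G i - Z r i) - (G (i-1) - Z r (i-1))))"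
        unfolding Sk_def tl0_def by simp
      then show ?thesis using prod_bound[OF A] by simp
    qed
    also have "(\<Sum>i=1..n. \<bar>(G i - Z r i) - (G (i-1) - Z r (i-1))\<bar>) \<le> real (card {1..n}) * \<epsilon> r"
    proof (rule sum_bounded_above)
      fix i assume i: "i \<in> {1..n}"
      have "\<bar>Z r i - G i\<bar> \<le> \<epsilon> r / 2" "\<bar>Z r (i-1) - G (i-1)\<bar> \<le> \<epsilon> r / 2" using Zap[of r] i by auto
      then show "\<bar>(G i - Z r i) - (G (i-1) - Z r (i-1))\<bar> \<le> \<epsilon> r" by linarith
    qed
    then have "\<delta> r * (\<Sum>i=1..n. \<bar>(G i - Z r i) - (G (i-1) - Z r (i-1))\<bar>) \<le> \<delta> r * (real n * \<epsilon> r)"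
      using assms(11) by (intro mult_left_mono) auto
    finally show ?thesis by (simp add: algebra_simps)
  qed
  define P where "P = (\<lambda>k. Dk k * (av k + (if k = 0 then 0 else av (k-1))))"
  define Q where "Q = (\<lambda>k. \<epsilon> k * (bv k + (if k = 0 then 0 else bv (k-1))))"
  have real_bound: "\<bar>Sk n F G Z W 0\<bar> \<le> (\<Sum>k=0..r. P k) + (\<Sum>k=0..r. Q k) + real n * \<delta> r * \<epsilon> r"
  proof -
    have "\<bar>Sk n F G Z W 0\<bar> \<le> \<bar>\<Sum>k=0..r. T1 n F Z W k + T2 n G Z W k\<bar> + \<bar>Sk n F G Z W (Suc r)\<bar>"
      unfolding decomp[of n F G Z W r] by (rule abs_triangle_ineq)
    also have "\<bar>\<Sum>k=0..r. T1 n F Z W k + T2 n G Z W k\<bar> \<le> (\<Sum>k=0..r. \<bar>T1 n F Z W k + T2 n G Z W k\<bar>)"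
      by (rule sum_abs)
    also have "\<dots> \<le> (\<Sum>k=0..r. P k + Q k)"
    proof (rule sum_mono)
      fix k assume "k \<in> {0..r}"
      then have "k \<le> r" by simp
      from T1b[OF this] T2b[OF this] show "\<bar>T1 n F Z W k + T2 n G Z W k\<bar> \<le> P k + Q k"
        unfolding P_def Q_def by linarith
    qed
    finally show ?thesis using Sb by (simp add: sum.distrib)
  qed
  have Pb: "\<And>k. k \<in> {0..r} \<Longrightarrow> ereal (P k) \<le> ereal (2 ^ k * Dk k) * TV g c d (\<epsilon> k)"
  proof -
    fix k assume "k \<in> {0..r}" then have k: "k \<le> r" by simp
    have y: "ereal (if k = 0 then 0 else av (k-1)) \<le> TV g c d (\<epsilon> k)"
    proof (cases "k = 0")
      case True then show ?thesis using TV_nonneg[of g c d "\<epsilon> k"] by (simp add: zero_ereal_def)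
    next
      case False
      have "ereal (av (k-1)) \<le> TV g c d (\<epsilon> (k-1))" using aTV[of "k-1"] k by simp
      also have "\<dots> \<le> TV g c d (\<epsilon> k)" by (rule TV_antimono) (use epsm[of k] False k in simp)
      finally show ?thesis using False by simp
    qed
    show "ereal (P k) \<le> ereal (2 ^ k * Dk k) * TV g c d (\<epsilon> k)"
      unfolding P_def by (rule ereal_bound) (use Dk0[OF k] av0 aTV[OF k] y in auto)
  qed
  have Qb: "\<And>k. k \<in> {0..r} \<Longrightarrow> ereal (Q k) \<le> ereal (2 ^ k * \<epsilon> k) * TV f c d (\<delta> k)"
  proof -
    fix k assume "k \<in> {0..r}" then have k: "k \<le> r" by simp
    have y: "ereal (if k = 0 then 0 else bv (k-1)) \<le> TV f c d (\<delta> k)"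
    proof (cases "k = 0")
      case True then show ?thesis using TV_nonneg[of f c d "\<delta> k"] by (simp add: zero_ereal_def)
    next
      case False
      have "ereal (bv (k-1)) \<le> TV f c d (\<delta> (k-1))" using bTV[of "k-1"] k by simp
      also have "\<dots> \<le> TV f c d (\<delta> k)" by (rule TV_antimono) (use delm[of k] False k in simp)
      finally show ?thesis using False by simp
    qed
    show "ereal (Q k) \<le> ereal (2 ^ k * \<epsilon> k) * TV f c d (\<delta> k)"
      unfolding Q_def by (rule ereal_bound) (use eps0[OF k] bv0 bTV[OF k] y in auto)
  qed
  have "ereal \<bar>Sk n F G Z W 0\<bar> \<le> ereal ((\<Sum>k=0..r. P k) + (\<Sum>k=0..r. Q k) + real n * \<delta> r * \<epsilon> r)"
    using real_bound by simp
  also have "\<dots> = (\<Sum>k=0..r. ereal (P k)) + (\<Sum>k=0..r. ereal (Q k)) + ereal (real n * \<delta> r * \<epsilon> r)"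
    by simp
  also have "\<dots> \<le> (\<Sum>k=0..r. ereal (2 ^ k * Dk k) * TV g c d (\<epsilon> k))
       + (\<Sum>k=0..r. ereal (2 ^ k * \<epsilon> k) * TV f c d (\<delta> k)) + ereal (real n * \<delta> r * \<epsilon> r)"
    by (rule add_mono[OF add_mono[OF sum_mono[OF Pb] sum_mono[OF Qb]] order_refl])
  finally show ?thesis unfolding lhs Dk_def D_def .
qed

end
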